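(* Let $A_1,\dots,A_m\in\mathbb{R}^{n\times n}$ be real symmetric matrices and fix $t\ge1$. The map sending an ordered orthogonal simultaneous block decomposition $(V_1,\dots,V_t)$ of $A_1,\dots,A_m$ to $(\epsilon_1,\dots,\epsilon_t)$, where $\epsilon_j$ is the orthogonal projection of $\mathbb{R}^n$ onto $V_j$, is a bijection onto the set of ordered complete sets of $t$ orthogonal idempotents $(\epsilon_1,\dots,\epsilon_t)$ of $Z(A_1,\dots,A_m)$ in which every $\epsilon_j$ is symmetric ($\epsilon_j^T=\epsilon_j$). In particular, there exist an orthogonal matrix $Q\in\mathrm{O}_n(\mathbb{R})$ and positive integers $n_1,\dots,n_t$ with $\sum_j n_j=n$ such that every $Q^TA_iQ$ is block diagonal with diagonal blocks of sizes $n_1,\dots,n_t$ if and only if $Z(A_1,\dots,A_m)$ contains a complete set of $t$ orthogonal idempotents all of which are symmetric matrices.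
   Context: The center is $Z(A_1,\dots,A_m)=\{X\in\mathbb{R}^{n\times n} : (A_iX)^T=A_iX \text{ for all } i\}$. An ordered orthogonal simultaneous block decomposition of length $t$ of $A_1,\dots,A_m$ is a $t$-tuple $(V_1,\dots,V_t)$ of nonzero subspaces of $\mathbb{R}^n$, pairwise orthogonal with respect to the standard inner product, with $\mathbb{R}^n=V_1\oplus\cdots\oplus V_t$ and $x^TA_iy=0$ for all $i$, all $j\neq l$, $x\in V_j$, $y\in V_l$. An ordered complete set of $t$ orthogonal idempotents of $Z(A_1,\dots,A_m)$ is a $t$-tuple of nonzero matrices $\epsilon_1,\dots,\epsilon_t\in Z(A_1,\dots,A_m)$ with $\epsilon_j^2=\epsilon_j$, $\epsilon_j\epsilon_l=0$ for $j\neq l$, and $\sum_j\epsilon_j=I_n$. *)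

theory Defs
  imports "HOL-Analysis.Analysis"
begin

text \<open>Matrices in R^(n x n) are modelled as real^'n^'n for a finite index type 'n
  (n = CARD('n)). The family A_1..A_m is a function A :: nat => matrix, used for i < m.
  Tuples of length t are lists of length t.\<close>

definition center :: "(nat \<Rightarrow> real^'n^'n) \<Rightarrow> nat \<Rightarrow> (real^'n^'n) set" where
  "center A m = {X. \<forall>i<m. transpose (A i ** X) = A i ** X}"

definition is_oosbd :: "(nat \<Rightarrow> real^'n^'n) \<Rightarrow> nat \<Rightarrow> nat \<Rightarrow> (real^'n) set list \<Rightarrow> bool" where
  "is_oosbd A m t Vs \<longleftrightarrow>
     length Vs = t \<and>
     (\<forall>j<t. subspace (Vs!j) \<and> Vs!j \<noteq> {0}) \<and>
     (\<forall>j<t. \<forall>l<t. j \<noteq> l \<longrightarrow> (\<forall>x\<in>Vs!j. \<forall>y\<in>Vs!l. x \<bullet> y = 0)) \<and>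
     (\<forall>v. \<exists>xs. (\<forall>j<t. xs j \<in> Vs!j) \<and> v = (\<Sum>j<t. xs j)) \<and>
     (\<forall>xs. (\<forall>j<t. xs j \<in> Vs!j) \<and> (\<Sum>j<t. xs j) = 0 \<longrightarrow> (\<forall>j<t. xs j = 0)) \<and>
     (\<forall>i<m. \<forall>j<t. \<forall>l<t. j \<noteq> l \<longrightarrow> (\<forall>x\<in>Vs!j. \<forall>y\<in>Vs!l. x \<bullet> (A i *v y) = 0))"

definition is_orth_proj :: "(real^'n) set \<Rightarrow> real^'n^'n \<Rightarrow> bool" where
  "is_orth_proj V P \<longleftrightarrow> (\<forall>x. P *v x \<in> V \<and> (\<forall>y\<in>V. (x - P *v x) \<bullet> y = 0))"

definition orth_proj :: "(real^'n) set \<Rightarrow> real^'n^'n" where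
  "orth_proj V = (THE P. is_orth_proj V P)"

definition is_complete_orth_idems :: "(nat \<Rightarrow> real^'n^'n) \<Rightarrow> nat \<Rightarrow> nat \<Rightarrow> (real^'n^'n) list \<Rightarrow> bool" where
  "is_complete_orth_idems A m t es \<longleftrightarrow>
     length es = t \<and>
     (\<forall>j<t. es!j \<in> center A m \<and> es!j \<noteq> 0 \<and> es!j ** es!j = es!j) \<and>
     (\<forall>j<t. \<forall>l<t. j \<noteq> l \<longrightarrow> es!j ** es!l = 0) \<and>
     (\<Sum>j<t. es!j) = mat 1"

definition idx_pos :: "'n::{finite,linorder} \<Rightarrow> nat" where
  "idx_pos k = card {k'. k' < k}"

text \<open>Block (0-based) containing index k, for block sizes ns:
  the j with sum(ns[0..j-1]) <= pos k < sum(ns[0..j]).\<close>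
definition block_of :: "nat list \<Rightarrow> 'n::{finite,linorder} \<Rightarrow> nat" where
  "block_of ns k = (LEAST j. idx_pos k < sum_list (take (Suc j) ns))"

definition block_diagonal :: "nat list \<Rightarrow> ((real, 'n::{finite,linorder}) vec, 'n::{finite,linorder}) vec \<Rightarrow> bool" where
  "block_diagonal ns M \<longleftrightarrow> (\<forall>k l. block_of ns k \<noteq> block_of ns l \<longrightarrow> M $ k $ l = 0)"

end

theory Submission
  imports Defs
begin


lemma inner_transpose_mv: "inner u ((M::real^'n^'n) *v w) = inner (transpose M *v u) w"
  by (simp add: dot_lmul_matrix[symmetric])

lemma sym_from_inner:
  fixes P :: "real^'n^'n"
  assumes "\<And>x y. inner (P *v x) y = inner x (P *v y)"
  shows "transpose P = P"
proof -
  have "transpose P *v x = P *v x" for x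
  proof -
    have "inner (transpose P *v x - P *v x) y = 0" for y
    proof -
      have "inner (transpose P *v x - P *v x) y = inner x (P *v y) - inner (P *v x) y"
        by (simp only: inner_diff_left inner_transpose_mv)
      then show ?thesis using assms[of x y] by simp
    qed
    then have "inner (transpose P *v x - P *v x) (transpose P *v x - P *v x) = 0" by blast
    then show ?thesis by simp
  qed
  then show ?thesis by (simp add: matrix_eq)
qed

lemma proj_fix:
  assumes "is_orth_proj V P" "subspace V" "x \<in> V"
  shows "P *v x = x"
proof -
  have a: "P *v x \<in> V" and b: "\<forall>y\<in>V. (x - P *v x) \<bullet> y = 0" using assms(1) unfolding is_orth_proj_def by auto
  have "x - P *v x \<in> V" using a assms(2,3) by (simp add: subspace_diff)
  then have "(x - P *v x) \<bullet> (x - P *v x) = 0" using b by blast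
  then show ?thesis by simp
qed

lemma proj_unique:
  assumes "subspace V" "is_orth_proj V P" "is_orth_proj V P'"
  shows "P = P'"
proof -
  have "P *v x = P' *v x" for x
  proof -
    have a: "P *v x \<in> V" "P' *v x \<in> V" and b: "\<forall>y\<in>V. (x - P *v x) \<bullet> y = 0" "\<forall>y\<in>V. (x - P' *v x) \<bullet> y = 0"
      using assms(2,3) unfolding is_orth_proj_def by auto
    have d: "P *v x - P' *v x \<in> V" using a assms(1) by (simp add: subspace_diff)
    have "P *v x - P' *v x = (x - P' *v x) - (x - P *v x)" by simp
    then have "(P *v x - P' *v x) \<bullet> (P *v x - P' *v x) = 0"
      using b d by (metis inner_diff_left diff_self)
    then show ?thesis by simp
  qed
  then show ?thesis by (simp add: matrix_eq)
qed

lemma proj_exists: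
  fixes V :: "(real^'n) set"
  assumes "subspace V"
  shows "\<exists>P. is_orth_proj V P"
proof -
  obtain B where B: "B \<subseteq> V" "pairwise orthogonal B" "\<And>x. x \<in> B \<Longrightarrow> norm x = 1"
      "independent B" "span B = V"
    using orthonormal_basis_subspace[OF assms] by metis
  have fin: "finite B" using B(4) independent_imp_finite by blast
  define f where "f x = (\<Sum>b\<in>B. (b \<bullet> x) *\<^sub>R b)" for x :: "real^'n"
  have lin: "linear f"
    by (rule linearI) (simp_all add: f_def inner_add_right scaleR_add_left sum.distrib scaleR_sum_right)
  define P where "P = matrix f"
  have Pf: "P *v x = f x" for x using lin by (simp add: P_def matrix_works)
  have "is_orth_proj V P"
    unfolding is_orth_proj_def
  proof (intro allI conjI ballI)
    fix x
    have "f x \<in> span B" unfolding f_def by (intro span_sum span_scale span_base)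
    then show "P *v x \<in> V" using B(5) Pf by simp
    fix y assume "y \<in> V"
    have "orthogonal (x - f x) b" if "b \<in> B" for b
    proof -
      have "f x \<bullet> b = (\<Sum>c\<in>B. (c \<bullet> x) * (c \<bullet> b))" by (simp add: f_def inner_sum_left)
      also have "\<dots> = (\<Sum>c\<in>B. if c = b then b \<bullet> x else 0)"
      proof (rule sum.cong)
        fix c assume "c \<in> B"
        show "(c \<bullet> x) * (c \<bullet> b) = (if c = b then b \<bullet> x else 0)"
        proof (cases "c = b")
          case True
          then have "c \<bullet> b = 1" using B(3)[OF that] by (simp add: norm_eq_1)
          then show ?thesis using True by simp
        next
          case False
          then have "c \<bullet> b = 0" using B(2) \<open>c \<in> B\<close> that by (auto simp: pairwise_def orthogonal_def)
          then show ?thesis using False by simp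
        qed
      qed simp
      also have "\<dots> = b \<bullet> x" using fin that by simp
      finally have "f x \<bullet> b = b \<bullet> x" .
      then have "(x - f x) \<bullet> b = 0" by (simp add: inner_diff_left inner_commute[of x b])
      then show ?thesis by (simp add: orthogonal_def)
    qed
    then have "orthogonal (x - f x) y" using \<open>y \<in> V\<close> B(5) orthogonal_to_span by blast
    then show "(x - P *v x) \<bullet> y = 0" by (simp add: Pf orthogonal_def)
  qed
  then show ?thesis by blast
qed

lemma orth_proj_is:
  assumes "subspace V" shows "is_orth_proj V (orth_proj V)"
proof -
  obtain P where "is_orth_proj V P" using proj_exists[OF assms] by blast
  then have "\<exists>!P. is_orth_proj V P" using proj_unique[OF assms] by blast
  then show ?thesis unfolding orth_proj_def by (rule theI')
qed

lemma orth_proj_eq: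
  assumes "subspace V" "is_orth_proj V P" shows "orth_proj V = P"
  using proj_unique[OF assms(1) orth_proj_is[OF assms(1)] assms(2)] .

lemma proj_props:
  assumes "is_orth_proj V P" "subspace V"
  shows "transpose P = P" "P ** P = P" "range (\<lambda>x. P *v x) = V"
    "\<And>y. (\<forall>z\<in>V. y \<bullet> z = 0) \<Longrightarrow> P *v y = 0"
proof -
  have in1: "P *v x \<in> V" and perp: "\<And>y. y\<in>V \<Longrightarrow> (x - P *v x) \<bullet> y = 0" for x
    using assms(1) unfolding is_orth_proj_def by auto
  have fix1: "P *v x = x" if "x \<in> V" for x using proj_fix[OF assms that] .
  have key: "inner (P *v x) y = inner (P *v x) (P *v y)" for x y
  proof -
    have "(y - P *v y) \<bullet> (P *v x) = 0" using perp[of "P *v x" y] in1[of x] by blast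
    then have "inner (P *v x) (y - P *v y) = 0" by (simp only: inner_commute)
    then show ?thesis by (simp add: inner_diff_right)
  qed
  show "transpose P = P"
  proof (rule sym_from_inner)
    fix x y
    have "inner (P *v x) y = inner (P *v x) (P *v y)" by (rule key)
    also have "\<dots> = inner (P *v y) (P *v x)" by (rule inner_commute)
    also have "\<dots> = inner (P *v y) x" by (rule key[symmetric])
    finally show "inner (P *v x) y = inner x (P *v y)" by (simp only: inner_commute)
  qed
  show "P ** P = P" by (simp add: matrix_eq fix1 in1 flip: matrix_vector_mul_assoc)
  show "range (\<lambda>x. P *v x) = V"
  proof
    show "range (\<lambda>x. P *v x) \<subseteq> V" using in1 by blast
    show "V \<subseteq> range (\<lambda>x. P *v x)"
    proof
      fix x assume "x \<in> V" then have "x = P *v x" using fix1 by simp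
      then show "x \<in> range (\<lambda>x. P *v x)" by blast
    qed
  qed
  fix y assume "\<forall>z\<in>V. y \<bullet> z = 0"
  then have "y \<bullet> (P *v y) = 0" using in1[of y] by blast
  then have "(P *v y) \<bullet> (P *v y) = 0" using key[of y y] by (simp add: inner_commute)
  then show "P *v y = 0" by simp
qed

lemma symidem_proj:
  fixes e :: "real^'n^'n"
  assumes "transpose e = e" "e ** e = e"
  shows "is_orth_proj (range (\<lambda>x. e *v x)) e" "subspace (range (\<lambda>x. e *v x))"
proof -
  show "subspace (range (\<lambda>x. e *v x))"
    using linear_subspace_image[OF matrix_vector_mul_linear[of e] subspace_UNIV] by simp
  show "is_orth_proj (range (\<lambda>x. e *v x)) e"
    unfolding is_orth_proj_def
  proof (intro allI conjI ballI)
    fix x show "e *v x \<in> range (\<lambda>x. e *v x)" by simp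
    fix y assume "y \<in> range (\<lambda>x. e *v x)"
    then obtain w where w: "y = e *v w" by blast
    have "(x - e *v x) \<bullet> (e *v w) = (e *v (x - e *v x)) \<bullet> w"
      using inner_transpose_mv[of "x - e *v x" e w] assms(1) by simp
    also have "\<dots> = 0" using assms(2) by (simp add: matrix_vector_mult_diff_distrib matrix_vector_mul_assoc)
    finally show "(x - e *v x) \<bullet> y = 0" using w by simp
  qed
qed



lemma mv_sum_left: "finite S \<Longrightarrow> (sum M S) *v x = (\<Sum>j\<in>S. M j *v (x::real^'n))"
  by (induction S rule: finite_induct) (simp_all add: matrix_vector_mult_add_rdistrib)

lemma mv_sum_right: "finite S \<Longrightarrow> (M::real^'n^'m) *v (sum f S) = (\<Sum>j\<in>S. M *v f j)"
  by (induction S rule: finite_induct) (simp_all add: matrix_vector_right_distrib)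

lemma mm_sum_right: "finite S \<Longrightarrow> (M::real^'n^'m) ** (sum N S) = (\<Sum>j\<in>S. M ** N j)"
  by (induction S rule: finite_induct) (simp_all add: matrix_add_ldistrib)

lemma matrix_add_rdistrib: "(B + C) ** (A::real^'n^'m) = B ** A + C ** A"
  by (vector matrix_matrix_mult_def sum.distrib[symmetric] field_simps)

lemma mm_sum_left: "finite S \<Longrightarrow> (sum N S) ** (M::real^'n^'m) = (\<Sum>j\<in>S. N j ** M)"
  by (induction S rule: finite_induct) (simp_all add: matrix_add_rdistrib)

lemma center_comm:
  fixes A e :: "real^'n^'n"
  assumes "transpose A = A" "transpose e = e"
  shows "transpose (A ** e) = A ** e \<longleftrightarrow> e ** A = A ** e"
  using assms by (simp add: matrix_transpose_mul)


definition good :: "(nat \<Rightarrow> real^'n^'n) \<Rightarrow> nat \<Rightarrow> nat \<Rightarrow> (real^'n^'n) list \<Rightarrow> bool" where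
  "good A m t es \<longleftrightarrow> is_complete_orth_idems A m t es \<and> (\<forall>j<t. transpose (es!j) = es!j)"

lemma idems_to_oosbd:
  fixes A :: "nat \<Rightarrow> real^'n^'n"
  assumes symA: "\<forall>i<m. transpose (A i) = A i" and g: "good A m t es"
  shows "is_oosbd A m t (map (\<lambda>e. range (\<lambda>x. e *v x)) es)"
proof -
  have len: "length es = t" and cen: "\<And>j. j<t \<Longrightarrow> es!j \<in> center A m"
    and nz: "\<And>j. j<t \<Longrightarrow> es!j \<noteq> 0" and idem: "\<And>j. j<t \<Longrightarrow> es!j ** es!j = es!j"
    and orth: "\<And>j l. j<t \<Longrightarrow> l<t \<Longrightarrow> j \<noteq> l \<Longrightarrow> es!j ** es!l = 0"
    and tot: "(\<Sum>j<t. es!j) = mat 1" and sym: "\<And>j. j<t \<Longrightarrow> transpose (es!j) = es!j"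
    using g unfolding good_def is_complete_orth_idems_def by auto
  let ?V = "\<lambda>j. range (\<lambda>x. es!j *v x)"
  have Vj: "map (\<lambda>e. range (\<lambda>x. e *v x)) es ! j = ?V j" if "j < t" for j using that len by simp
  have mult: "es!l *v (es!j *v u) = (if j = l then es!j *v u else 0)" if "j<t" "l<t" for j l u
    using orth[of l j] idem[of j] that by (auto simp: matrix_vector_mul_assoc)
  have comm: "es!j ** A i = A i ** es!j" if "j<t" "i<m" for i j
    using cen[OF that(1)] center_comm[of "A i" "es!j"] symA sym that unfolding center_def by auto
  show ?thesis unfolding is_oosbd_def
  proof (intro conjI allI impI ballI)
    show "length (map (\<lambda>e. range (\<lambda>x. e *v x)) es) = t" using len by simp
  next
    fix j assume j: "j < t"
    show "subspace (map (\<lambda>e. range (\<lambda>x. e *v x)) es ! j)"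
      using Vj[OF j] symidem_proj(2)[OF sym[OF j] idem[OF j]] by simp
    have "\<exists>x. es!j *v x \<noteq> 0" using nz[OF j] by (auto simp: matrix_eq)
    then show "map (\<lambda>e. range (\<lambda>x. e *v x)) es ! j \<noteq> {0}" using Vj[OF j] by auto
  next
    fix j l x y assume jl: "j < t" "l < t" "j \<noteq> l"
      and x: "x \<in> map (\<lambda>e. range (\<lambda>x. e *v x)) es ! j" and y: "y \<in> map (\<lambda>e. range (\<lambda>x. e *v x)) es ! l"
    obtain u w where u: "x = es!j *v u" and w: "y = es!l *v w" using x y Vj jl by auto
    have "x \<bullet> y = (es!l *v x) \<bullet> w" using inner_transpose_mv[of x "es!l" w] sym[OF jl(2)] w by simp
    also have "\<dots> = 0" using mult[of j l u] jl u by simp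
    finally show "x \<bullet> y = 0" .
  next
    fix v
    show "\<exists>xs. (\<forall>j<t. xs j \<in> map (\<lambda>e. range (\<lambda>x. e *v x)) es ! j) \<and> v = (\<Sum>j<t. xs j)"
    proof (intro exI conjI allI impI)
      fix j assume "j < t"
      then show "es!j *v v \<in> map (\<lambda>e. range (\<lambda>x. e *v x)) es ! j" using Vj by simp
    next
      show "v = (\<Sum>j<t. es!j *v v)" using mv_sum_left[of "{..<t}" "\<lambda>j. es!j" v] tot by simp
    qed
  next
    fix xs l assume H: "(\<forall>j<t. xs j \<in> map (\<lambda>e. range (\<lambda>x. e *v x)) es ! j) \<and> (\<Sum>j<t. xs j) = 0"
      and l: "l < t"
    have "\<forall>j<t. \<exists>u. xs j = es!j *v u" using H Vj by auto
    then obtain u where u: "\<And>j. j<t \<Longrightarrow> xs j = es!j *v u j" by metis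
    have "0 = es!l *v (\<Sum>j<t. xs j)" using H by simp
    also have "\<dots> = (\<Sum>j<t. es!l *v xs j)" by (simp add: mv_sum_right)
    also have "\<dots> = (\<Sum>j<t. if j = l then xs l else 0)"
      by (rule sum.cong) (auto simp: u mult l)
    also have "\<dots> = xs l" using l by simp
    finally show "xs l = 0" by simp
  next
    fix i j l x y assume i: "i < m" and jl: "j < t" "l < t" "j \<noteq> l"
      and x: "x \<in> map (\<lambda>e. range (\<lambda>x. e *v x)) es ! j" and y: "y \<in> map (\<lambda>e. range (\<lambda>x. e *v x)) es ! l"
    obtain u w where u: "x = es!j *v u" and w: "y = es!l *v w" using x y Vj jl by auto
    have "x \<bullet> (A i *v y) = u \<bullet> (es!j *v (A i *v y))"
      using inner_transpose_mv[of u "es!j" "A i *v y"] sym[OF jl(1)] u by (simp add: inner_commute)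
    also have "es!j *v (A i *v y) = A i *v (es!j *v y)"
      using comm[OF jl(1) i] by (simp add: matrix_vector_mul_assoc)
    also have "es!j *v y = 0" using mult[of l j w] jl w by simp
    finally show "x \<bullet> (A i *v y) = 0" by simp
  qed
qed

lemma idem_orth_proj:
  fixes e :: "real^'n^'n"
  assumes "transpose e = e" "e ** e = e"
  shows "orth_proj (range (\<lambda>x. e *v x)) = e"
  using orth_proj_eq symidem_proj[OF assms] by blast



lemma oosbd_to_idems:
  fixes A :: "nat \<Rightarrow> real^'n^'n"
  assumes symA: "\<forall>i<m. transpose (A i) = A i" and O: "is_oosbd A m t Vs"
  shows "good A m t (map orth_proj Vs)"
    and "\<And>j. j < t \<Longrightarrow> range (\<lambda>x. orth_proj (Vs!j) *v x) = Vs!j"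
proof -
  note O' = O[unfolded is_oosbd_def]
  note H = O'[THEN conjunct1] O'[THEN conjunct2, THEN conjunct1]
     O'[THEN conjunct2, THEN conjunct2, THEN conjunct1]
     O'[THEN conjunct2, THEN conjunct2, THEN conjunct2, THEN conjunct1]
     O'[THEN conjunct2, THEN conjunct2, THEN conjunct2, THEN conjunct2, THEN conjunct2]
  have len: "length Vs = t" using H(1) .
  have sub: "\<And>j. j<t \<Longrightarrow> subspace (Vs!j)" using H(2) by simp
  have nz: "\<And>j. j<t \<Longrightarrow> Vs!j \<noteq> {0}" using H(2) by simp
  have orth: "\<And>j l x y. j<t \<Longrightarrow> l<t \<Longrightarrow> j \<noteq> l \<Longrightarrow> x \<in> Vs!j \<Longrightarrow> y \<in> Vs!l \<Longrightarrow> x \<bullet> y = 0"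
    using H(3) by simp
  have dec: "\<And>v. \<exists>xs. (\<forall>j<t. xs j \<in> Vs!j) \<and> v = (\<Sum>j<t. xs j)" using H(4) by simp
  have blk: "\<And>i j l x y. i<m \<Longrightarrow> j<t \<Longrightarrow> l<t \<Longrightarrow> j \<noteq> l \<Longrightarrow> x \<in> Vs!j \<Longrightarrow> y \<in> Vs!l \<Longrightarrow> x \<bullet> (A i *v y) = 0"
    using H(5) by simp
  define P where "P j = orth_proj (Vs!j)" for j
  have isP: "is_orth_proj (Vs!j) (P j)" if "j<t" for j using orth_proj_is[OF sub[OF that]] P_def by simp
  note pp = proj_props[OF isP sub]
  have fixP: "P j *v x = x" if "j<t" "x \<in> Vs!j" for j x using proj_fix[OF isP sub] that by blast
  have inP: "P j *v x \<in> Vs!j" if "j<t" for j x using isP[OF that] unfolding is_orth_proj_def by blast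
  have perpP: "P j *v y = 0" if "j<t" "l<t" "j \<noteq> l" "y \<in> Vs!l" for j l y
    using pp(4)[OF that(1)] orth[OF that(2) that(1)] that by auto
  have Pdelta: "P j *v x = (if l = j then x else 0)" if "j<t" "l<t" "x \<in> Vs!l" for j l x
    using fixP perpP that by auto
  show "\<And>j. j < t \<Longrightarrow> range (\<lambda>x. orth_proj (Vs!j) *v x) = Vs!j" using pp(3) P_def by simp
  have PP0: "P j ** P l = 0" if "j<t" "l<t" "j \<noteq> l" for j l
    unfolding matrix_eq using perpP[OF that] inP[OF that(2)] by (simp add: matrix_vector_mul_assoc[symmetric])
  have tot: "(\<Sum>j<t. P j) = mat 1"
    unfolding matrix_eq
  proof
    fix v
    obtain xs where xs: "\<forall>j<t. xs j \<in> Vs!j" "v = (\<Sum>j<t. xs j)" using dec by blast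
    have "(\<Sum>j<t. P j) *v v = (\<Sum>j<t. P j *v v)" by (simp add: mv_sum_left)
    also have "\<dots> = (\<Sum>j<t. xs j)"
    proof (rule sum.cong)
      fix j assume j: "j \<in> {..<t}"
      have "P j *v v = (\<Sum>l<t. P j *v xs l)" using xs(2) by (simp add: mv_sum_right)
      also have "\<dots> = (\<Sum>l<t. if l = j then xs j else 0)"
        by (rule sum.cong) (use j xs(1) Pdelta in auto)
      also have "\<dots> = xs j" using j by (subst sum.delta) auto
      finally show "P j *v v = xs j" .
    qed simp
    finally show "(\<Sum>j<t. P j) *v v = mat 1 *v v" using xs(2) by simp
  qed
  have PAP: "P j ** A i ** P l = 0" if "i<m" "j<t" "l<t" "j \<noteq> l" for i j l
    unfolding matrix_eq
  proof
    fix x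
    let ?y = "P l *v x" let ?z = "A i *v ?y"
    have "(P j *v ?z) \<bullet> ?z = 0" using blk[OF that(1,2,3,4) inP[OF that(2)] inP[OF that(3)]] .
    moreover have "(P j *v ?z) \<bullet> ?z = (P j *v ?z) \<bullet> (P j *v ?z)"
    proof -
      have "(?z - P j *v ?z) \<bullet> (P j *v ?z) = 0" using isP[OF that(2)] inP[OF that(2)] unfolding is_orth_proj_def by blast
      then have "?z \<bullet> (P j *v ?z) - (P j *v ?z) \<bullet> (P j *v ?z) = 0" by (simp only: inner_diff_left)
      then have "?z \<bullet> (P j *v ?z) = (P j *v ?z) \<bullet> (P j *v ?z)" by simp
      then show ?thesis using inner_commute[of "P j *v ?z" ?z] by simp
    qed
    ultimately have "P j *v ?z = 0" by simp
    then show "(P j ** A i ** P l) *v x = 0 *v x" by (simp add: matrix_vector_mul_assoc[symmetric])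
  qed
  have comm: "P j ** A i = A i ** P j" if "i<m" "j<t" for i j
  proof -
    have "P j ** A i = P j ** A i ** (\<Sum>l<t. P l)" using tot by simp
    also have "\<dots> = (\<Sum>l<t. P j ** A i ** P l)" by (simp add: mm_sum_right)
    also have "\<dots> = (\<Sum>l<t. if l = j then P j ** A i ** P j else 0)"
      by (rule sum.cong) (use PAP that in auto)
    also have "\<dots> = P j ** A i ** P j" using that by (subst sum.delta) auto
    finally have 1: "P j ** A i = P j ** A i ** P j" .
    have "A i ** P j = (\<Sum>l<t. P l) ** A i ** P j" using tot by simp
    also have "\<dots> = (\<Sum>l<t. P l ** A i ** P j)" by (simp add: mm_sum_left matrix_mul_assoc)
    also have "\<dots> = (\<Sum>l<t. if l = j then P j ** A i ** P j else 0)"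
      by (rule sum.cong) (use PAP that in auto)
    also have "\<dots> = P j ** A i ** P j" using that by (subst sum.delta) auto
    finally show ?thesis using 1 by simp
  qed
  show "good A m t (map orth_proj Vs)"
    unfolding good_def is_complete_orth_idems_def
  proof (intro conjI allI impI)
    show "length (map orth_proj Vs) = t" using len by simp
  next
    fix j assume j: "j < t"
    have e: "map orth_proj Vs ! j = P j" using j len P_def by simp
    show "map orth_proj Vs ! j \<in> center A m" unfolding e center_def
      using center_comm[of "A _" "P j"] symA pp(1)[OF j] comm j by auto
    obtain x where x: "x \<in> Vs!j" "x \<noteq> 0" using nz[OF j] sub[OF j] subspace_0 by blast
    show "map orth_proj Vs ! j \<noteq> 0" unfolding e
    proof
      assume "P j = 0"
      then have "P j *v x = 0" by simp
      then show False using fixP[OF j x(1)] x(2) by simp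
    qed
    show "map orth_proj Vs ! j ** map orth_proj Vs ! j = map orth_proj Vs ! j" unfolding e using pp(2) j by blast
    show "transpose (map orth_proj Vs ! j) = map orth_proj Vs ! j" unfolding e using pp(1) j by blast
  next
    fix j l assume "j < t" "l < t" "j \<noteq> l"
    then show "map orth_proj Vs ! j ** map orth_proj Vs ! l = 0" using PP0 len P_def by simp
  next
    show "(\<Sum>j<t. map orth_proj Vs ! j) = mat 1" using tot len P_def by simp
  qed
qed

lemma part1:
  fixes A :: "nat \<Rightarrow> real^'n^'n"
  assumes symA: "\<forall>i<m. transpose (A i) = A i"
  shows "bij_betw (map orth_proj) {Vs. is_oosbd A m t Vs} {es. good A m t es}"
proof (rule bij_betw_byWitness[where f' = "map (\<lambda>e. range (\<lambda>x. e *v x))"])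
  show "\<forall>a\<in>{Vs. is_oosbd A m t Vs}. map (\<lambda>e. range (\<lambda>x. e *v x)) (map orth_proj a) = a"
  proof
    fix Vs assume "Vs \<in> {Vs. is_oosbd A m t Vs}"
    then have O: "is_oosbd A m t Vs" by simp
    then have "length Vs = t" unfolding is_oosbd_def by simp
    then show "map (\<lambda>e. range (\<lambda>x. e *v x)) (map orth_proj Vs) = Vs"
      using oosbd_to_idems(2)[OF symA O] by (simp add: list_eq_iff_nth_eq)
  qed
  show "\<forall>a'\<in>{es. good A m t es}. map orth_proj (map (\<lambda>e. range (\<lambda>x. e *v x)) a') = a'"
  proof
    fix es assume "es \<in> {es. good A m t es}"
    then have g: "good A m t es" by simp
    then have "length es = t" "\<And>j. j<t \<Longrightarrow> transpose (es!j) = es!j \<and> es!j ** es!j = es!j"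
      unfolding good_def is_complete_orth_idems_def by auto
    then show "map orth_proj (map (\<lambda>e. range (\<lambda>x. e *v x)) es) = es"
      using idem_orth_proj by (auto simp: list_eq_iff_nth_eq)
  qed
  show "map orth_proj ` {Vs. is_oosbd A m t Vs} \<subseteq> {es. good A m t es}"
    using oosbd_to_idems(1)[OF symA] by blast
  show "map (\<lambda>e. range (\<lambda>x. e *v x)) ` {es. good A m t es} \<subseteq> {Vs. is_oosbd A m t Vs}"
    using idems_to_oosbd[OF symA] by blast
qed



lemma idx_pos_lt: "idx_pos (k::'n::{finite,linorder}) < CARD('n)"
proof -
  have "{k'. k' < k} \<subset> (UNIV::'n set)" by auto
  then show ?thesis unfolding idx_pos_def by (simp add: psubset_card_mono)
qed

lemma idx_pos_mono: "(k::'n::{finite,linorder}) < l \<Longrightarrow> idx_pos k < idx_pos l"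
proof -
  assume "k < l"
  then have "{k'. k' < k} \<subset> {k'. k' < l}" by auto
  then show ?thesis unfolding idx_pos_def by (simp add: psubset_card_mono)
qed

lemma idx_pos_inj: "inj (idx_pos :: 'n::{finite,linorder} \<Rightarrow> nat)"
proof (rule injI)
  fix k l :: 'n assume "idx_pos k = idx_pos l"
  show "k = l"
  proof (rule ccontr)
    assume "k \<noteq> l"
    then show False
    proof (rule linorder_neqE)
      assume "k < l" then show False using idx_pos_mono[of k l] \<open>idx_pos k = idx_pos l\<close> by simp
    next
      assume "l < k" then show False using idx_pos_mono[of l k] \<open>idx_pos k = idx_pos l\<close> by simp
    qed
  qed
qed

lemma idx_pos_surj: "p < CARD('n::{finite,linorder}) \<Longrightarrow> \<exists>k::'n. idx_pos k = p"
proof -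
  assume p: "p < CARD('n)"
  have sub: "range (idx_pos :: 'n \<Rightarrow> nat) \<subseteq> {..<CARD('n)}" using idx_pos_lt by auto
  have "card (range (idx_pos :: 'n \<Rightarrow> nat)) = CARD('n)" using idx_pos_inj card_image by blast
  then have "range (idx_pos :: 'n \<Rightarrow> nat) = {..<CARD('n)}" using sub by (intro card_subset_eq) auto
  then have "p \<in> range (idx_pos :: 'n \<Rightarrow> nat)" using p by simp
  then show ?thesis by blast
qed

lemma take_sum_mono: "a \<le> b \<Longrightarrow> sum_list (take a ns) \<le> sum_list (take b (ns::nat list))"
proof -
  assume "a \<le> b"
  then have "take b ns = take a ns @ take (b - a) (drop a ns)" using take_add[of a "b - a" ns] by simp
  then show ?thesis by simp
qed

lemma take_Suc_sum: "j < length ns \<Longrightarrow> sum_list (take (Suc j) ns) = sum_list (take j ns) + ns!j"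
  by (simp add: take_Suc_conv_app_nth)

lemma block_uniq:
  assumes "sum_list (take j ns) \<le> p" "p < sum_list (take (Suc j) (ns::nat list))"
  shows "(LEAST j'. p < sum_list (take (Suc j') ns)) = j"
proof (rule Least_equality)
  show "p < sum_list (take (Suc j) ns)" by fact
  fix j' assume "p < sum_list (take (Suc j') ns)"
  show "j \<le> j'"
  proof (rule ccontr)
    assume "\<not> j \<le> j'"
    then have "Suc j' \<le> j" by simp
    then have "sum_list (take (Suc j') ns) \<le> sum_list (take j ns)" by (rule take_sum_mono)
    then show False using assms \<open>p < sum_list (take (Suc j') ns)\<close> by simp
  qed
qed

lemma block_ex:
  assumes "p < sum_list (ns::nat list)"
  defines "j \<equiv> (LEAST j'. p < sum_list (take (Suc j') ns))"
  shows "j < length ns" "sum_list (take j ns) \<le> p" "p < sum_list (take (Suc j) ns)"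
proof -
  have ne: "ns \<noteq> []" using assms by auto
  have ln: "Suc (length ns - 1) = length ns" using ne by simp
  have w: "p < sum_list (take (Suc (length ns - 1)) ns)" unfolding ln using assms(1) by simp
  show "p < sum_list (take (Suc j) ns)" unfolding j_def using w by (rule LeastI)
  have "j \<le> length ns - 1" unfolding j_def using w by (rule Least_le)
  then show "j < length ns" using ln by linarith
  show "sum_list (take j ns) \<le> p"
  proof (cases j)
    case 0 then show ?thesis by simp
  next
    case (Suc j')
    then have "j' < j" by simp
    then have "\<not> p < sum_list (take (Suc j') ns)" unfolding j_def by (rule not_less_Least)
    then show ?thesis using Suc by simp
  qed
qed

lemma entry_formula:
  fixes Q M :: "real^'n^'n"
  shows "(transpose Q ** M ** Q) $ k $ l = column k Q \<bullet> (M *v column l Q)"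
proof -
  have "(transpose Q ** M ** Q) $ k $ l = (\<Sum>c\<in>UNIV. (\<Sum>d\<in>UNIV. Q$d$k * M$d$c) * Q$c$l)"
    by (simp add: matrix_matrix_mult_def transpose_def)
  also have "\<dots> = (\<Sum>c\<in>UNIV. \<Sum>d\<in>UNIV. Q$d$k * M$d$c * Q$c$l)"
    by (simp only: sum_distrib_right)
  also have "\<dots> = (\<Sum>d\<in>UNIV. \<Sum>c\<in>UNIV. Q$d$k * M$d$c * Q$c$l)"
    by (rule sum.swap)
  also have "\<dots> = (\<Sum>d\<in>UNIV. Q$d$k * (\<Sum>c\<in>UNIV. M$d$c * Q$c$l))"
    by (simp only: sum_distrib_left mult.assoc)
  also have "\<dots> = column k Q \<bullet> (M *v column l Q)"
    by (simp add: column_def inner_vec_def matrix_vector_mult_def)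
  finally show ?thesis .
qed

definition Dm :: "('n::finite \<Rightarrow> nat) \<Rightarrow> nat \<Rightarrow> real^'n^'n" where
  "Dm bl j = (\<chi> a b. if a = b \<and> bl a = j then 1 else 0)"

lemma Dm_entry: "Dm bl j $ a $ b = (if a = b then (if bl a = j then 1 else 0) else 0)"
  by (simp add: Dm_def)

lemma Dm_left: "(Dm bl j ** B) $ a $ b = (if bl a = j then B $ a $ b else 0)"
proof -
  have "(Dm bl j ** B) $ a $ b = (\<Sum>k\<in>UNIV. Dm bl j $ a $ k * B $ k $ b)"
    by (simp add: matrix_matrix_mult_def)
  also have "\<dots> = (\<Sum>k\<in>UNIV. (if a = k then (if bl a = j then B $ k $ b else 0) else 0))"
    by (rule sum.cong) (auto simp: Dm_entry)
  also have "\<dots> = (if bl a = j then B $ a $ b else 0)" by (subst sum.delta') simp_all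
  finally show ?thesis .
qed

lemma Dm_right: "(B ** Dm bl j) $ a $ b = (if bl b = j then B $ a $ b else 0)"
proof -
  have "(B ** Dm bl j) $ a $ b = (\<Sum>k\<in>UNIV. B $ a $ k * Dm bl j $ k $ b)"
    by (simp add: matrix_matrix_mult_def)
  also have "\<dots> = (\<Sum>k\<in>UNIV. (if k = b then (if bl b = j then B $ a $ b else 0) else 0))"
    by (rule sum.cong) (auto simp: Dm_entry)
  also have "\<dots> = (if bl b = j then B $ a $ b else 0)" by (subst sum.delta) simp_all
  finally show ?thesis .
qed

lemma Dm_mult: "Dm bl j ** Dm bl l = (if j = l then Dm bl j else 0)"
  unfolding vec_eq_iff by (auto simp: Dm_left Dm_entry)

lemma Dm_transpose: "transpose (Dm bl j) = Dm bl j"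
  unfolding vec_eq_iff by (simp add: transpose_def Dm_entry)

lemma Dm_sum: "(\<forall>k. bl k < t) \<Longrightarrow> (\<Sum>j<t. Dm bl j) = mat 1"
  unfolding vec_eq_iff
proof (intro allI)
  fix a b assume H: "\<forall>k. bl k < t"
  have "(\<Sum>j<t. Dm bl j) $ a $ b = (\<Sum>j<t. if a = b then (if bl a = j then 1 else 0) else 0)"
    by (simp add: Dm_entry)
  also have "\<dots> = (if a = b then 1 else 0)" using H by (cases "a = b") (simp_all add: sum.delta')
  finally show "(\<Sum>j<t. Dm bl j) $ a $ b = mat 1 $ a $ b" by (simp add: mat_def)
qed

lemma Dm_comm:
  assumes "\<forall>k l. bl k \<noteq> bl l \<longrightarrow> B $ k $ l = 0"
  shows "Dm bl j ** B = B ** Dm bl j"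
  unfolding vec_eq_iff using assms by (auto simp: Dm_left Dm_right)


lemma conj_mult:
  fixes Q X Y :: "real^'n^'n"
  assumes "transpose Q ** Q = mat 1"
  shows "(Q ** X ** transpose Q) ** (Q ** Y ** transpose Q) = Q ** (X ** Y) ** transpose Q"
proof -
  have "(Q ** X ** transpose Q) ** (Q ** Y ** transpose Q) = Q ** X ** (transpose Q ** Q) ** Y ** transpose Q"
    by (simp only: matrix_mul_assoc)
  also have "\<dots> = Q ** (X ** Y) ** transpose Q" using assms by (simp add: matrix_mul_assoc)
  finally show ?thesis .
qed

lemma conj_back:
  fixes Q X :: "real^'n^'n"
  assumes "transpose Q ** Q = mat 1"
  shows "transpose Q ** (Q ** X ** transpose Q) ** Q = X"
proof -
  have "transpose Q ** (Q ** X ** transpose Q) ** Q = (transpose Q ** Q) ** X ** (transpose Q ** Q)"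
    by (simp only: matrix_mul_assoc)
  also have "\<dots> = X" using assms by simp
  finally show ?thesis .
qed

lemma conj_fwd:
  fixes Q X :: "real^'n^'n"
  assumes "Q ** transpose Q = mat 1"
  shows "Q ** (transpose Q ** X ** Q) ** transpose Q = X"
proof -
  have "Q ** (transpose Q ** X ** Q) ** transpose Q = (Q ** transpose Q) ** X ** (Q ** transpose Q)"
    by (simp only: matrix_mul_assoc)
  also have "\<dots> = X" using assms by simp
  finally show ?thesis .
qed

lemma block_of_lt:
  assumes "length ns = t" "sum_list ns = CARD('n::{finite,linorder})"
  shows "block_of ns (k::'n) < t"
  using block_ex(1)[of "idx_pos k" ns] idx_pos_lt[of k] assms unfolding block_of_def by simp

lemma block_of_surj:
  assumes "length ns = t" "sum_list ns = CARD('n::{finite,linorder})" "\<forall>j<t. ns!j > 0" "j < t"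
  shows "\<exists>k::'n. block_of ns k = j"
proof -
  let ?p = "sum_list (take j ns)"
  have s: "sum_list (take (Suc j) ns) = ?p + ns!j" using assms(1,4) by (simp add: take_Suc_sum)
  have le: "sum_list (take (Suc j) ns) \<le> sum_list (take (length ns) ns)"
    using assms(1,4) by (intro take_sum_mono) simp
  have pj: "ns!j > 0" using assms(3,4) by simp
  have "sum_list (take (length ns) ns) = CARD('n)" using assms(2) by simp
  then have "?p < CARD('n)" using s le pj by linarith
  then obtain k :: 'n where k: "idx_pos k = ?p" using idx_pos_surj by blast
  have "block_of ns k = j" unfolding block_of_def k
    by (rule block_uniq) (use s assms(3,4) in simp_all)
  then show ?thesis by blast
qed

lemma part2_fwd:
  fixes A :: "nat \<Rightarrow> ((real, 'n::{finite,linorder}) vec, 'n::{finite,linorder}) vec"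
  assumes symA: "\<forall>i<m. transpose (A i) = A i"
    and Q: "orthogonal_matrix Q" and len: "length ns = t" and pos: "\<forall>j<t. ns!j > 0"
    and sn: "sum_list ns = CARD('n)"
    and bd: "\<forall>i<m. block_diagonal ns (transpose Q ** A i ** Q)"
  shows "\<exists>es. good A m t es"
proof -
  let ?bl = "block_of ns :: 'n \<Rightarrow> nat"
  have QtQ: "transpose Q ** Q = mat 1" and QQt: "Q ** transpose Q = mat 1"
    using Q unfolding orthogonal_matrix_def by auto
  define E where "E j = Q ** Dm ?bl j ** transpose Q" for j
  have blt: "\<forall>k. ?bl k < t" using block_of_lt[OF len sn] by blast
  have Esym: "transpose (E j) = E j" for j
    by (simp add: E_def matrix_transpose_mul matrix_mul_assoc Dm_transpose)
  have Emult: "E j ** E l = (if j = l then E j else 0)" for j l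
    using conj_mult[OF QtQ, of "Dm ?bl j" "Dm ?bl l"] by (simp add: E_def Dm_mult)
  have Enz: "E j \<noteq> 0" if jt: "j < t" for j
  proof
    assume "E j = 0"
    then have "Dm ?bl j = 0" using conj_back[OF QtQ, of "Dm ?bl j"] by (simp add: E_def)
    moreover obtain k where "?bl k = j" using block_of_surj[OF len sn pos jt] by blast
    ultimately show False using Dm_entry[of ?bl j k k] by simp
  qed
  have Esum: "(\<Sum>j<t. E j) = mat 1"
  proof -
    have "(\<Sum>j<t. E j) = Q ** (\<Sum>j<t. Dm ?bl j) ** transpose Q"
      by (simp add: E_def mm_sum_left mm_sum_right)
    also have "\<dots> = mat 1" using Dm_sum[OF blt] QQt by simp
    finally show ?thesis .
  qed
  have Ecomm: "E j ** A i = A i ** E j" if "i < m" for i j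
  proof -
    let ?B = "transpose Q ** A i ** Q"
    have Aeq: "A i = Q ** ?B ** transpose Q" using conj_fwd[OF QQt] by simp
    have bdi: "\<forall>k l. ?bl k \<noteq> ?bl l \<longrightarrow> ?B $ k $ l = 0" using bd that unfolding block_diagonal_def by blast
    have "E j ** A i = Q ** (Dm ?bl j ** ?B) ** transpose Q"
      using conj_mult[OF QtQ, of "Dm ?bl j" ?B] Aeq E_def by metis
    also have "\<dots> = Q ** (?B ** Dm ?bl j) ** transpose Q" using Dm_comm[OF bdi] by simp
    also have "\<dots> = A i ** E j"
      using conj_mult[OF QtQ, of ?B "Dm ?bl j"] Aeq E_def by metis
    finally show ?thesis .
  qed
  define es where "es = map E [0..<t]"
  have esj: "es ! j = E j" if "j < t" for j using that by (simp add: es_def)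
  have "good A m t es" unfolding good_def is_complete_orth_idems_def
  proof (intro conjI allI impI)
    show "length es = t" by (simp add: es_def)
  next
    fix j assume j: "j < t"
    show "es ! j \<in> center A m" unfolding center_def esj[OF j]
      using center_comm[of "A _" "E j"] symA Esym Ecomm by auto
    show "es ! j \<noteq> 0" using Enz j esj by simp
    show "es ! j ** es ! j = es ! j" using Emult esj j by simp
    show "transpose (es ! j) = es ! j" using Esym esj j by simp
  next
    fix j l assume "j < t" "l < t" "j \<noteq> l"
    then show "es ! j ** es ! l = 0" using Emult esj by simp
  next
    show "(\<Sum>j<t. es ! j) = mat 1" using Esum esj by simp
  qed
  then show ?thesis by blast
qed



lemma part2_bwd:
  fixes A :: "nat \<Rightarrow> ((real, 'n::{finite,linorder}) vec, 'n::{finite,linorder}) vec"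
  assumes symA: "\<forall>i<m. transpose (A i) = A i" and g: "good A m t es"
  shows "\<exists>Q ns. orthogonal_matrix Q \<and> length ns = t \<and> (\<forall>j<t. ns!j > 0) \<and>
              sum_list ns = CARD('n) \<and>
              (\<forall>i<m. block_diagonal ns (transpose Q ** A i ** Q))"
proof -
  define Vs where "Vs = map (\<lambda>e. range (\<lambda>x. e *v x)) es"
  have O: "is_oosbd A m t Vs" unfolding Vs_def by (rule idems_to_oosbd[OF symA g])
  note O' = O[unfolded is_oosbd_def]
  note H = O'[THEN conjunct1] O'[THEN conjunct2, THEN conjunct1]
     O'[THEN conjunct2, THEN conjunct2, THEN conjunct1]
     O'[THEN conjunct2, THEN conjunct2, THEN conjunct2, THEN conjunct2, THEN conjunct2]
  have sub: "\<And>j. j<t \<Longrightarrow> subspace (Vs!j)" using H(2) by simp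
  have nz: "\<And>j. j<t \<Longrightarrow> Vs!j \<noteq> {0}" using H(2) by simp
  have orth: "\<And>j l x y. j<t \<Longrightarrow> l<t \<Longrightarrow> j \<noteq> l \<Longrightarrow> x \<in> Vs!j \<Longrightarrow> y \<in> Vs!l \<Longrightarrow> x \<bullet> y = 0"
    using H(3) by simp
  have blk: "\<And>i j l x y. i<m \<Longrightarrow> j<t \<Longrightarrow> l<t \<Longrightarrow> j \<noteq> l \<Longrightarrow> x \<in> Vs!j \<Longrightarrow> y \<in> Vs!l \<Longrightarrow> x \<bullet> (A i *v y) = 0"
    using H(4) by simp
  have lenes: "length es = t" and tot: "(\<Sum>j<t. es!j) = mat 1"
    using g unfolding good_def is_complete_orth_idems_def by auto
  have Vsj: "Vs!j = range (\<lambda>x. es!j *v x)" if "j < t" for j using that lenes Vs_def by simp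

  have "\<forall>j. \<exists>B. j < t \<longrightarrow> (B \<subseteq> Vs!j \<and> pairwise orthogonal B \<and> (\<forall>x\<in>B. norm x = 1) \<and> independent B \<and> span B = Vs!j)"
  proof
    fix j show "\<exists>B. j < t \<longrightarrow> (B \<subseteq> Vs!j \<and> pairwise orthogonal B \<and> (\<forall>x\<in>B. norm x = 1) \<and> independent B \<and> span B = Vs!j)"
    proof (cases "j < t")
      case True
      obtain B where "B \<subseteq> Vs!j" "pairwise orthogonal B" "\<And>x. x \<in> B \<Longrightarrow> norm x = 1" "independent B" "span B = Vs!j"
        using orthonormal_basis_subspace[OF sub[OF True]] by metis
      then show ?thesis by blast
    qed simp
  qed
  from choice[OF this] obtain B where Bp: "\<forall>j. j < t \<longrightarrow> (B j \<subseteq> Vs!j \<and> pairwise orthogonal (B j) \<and> (\<forall>x\<in>B j. norm x = 1) \<and> independent (B j) \<and> span (B j) = Vs!j)"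
    by blast
  have BV: "B j \<subseteq> Vs!j" and Bpw: "pairwise orthogonal (B j)" and Bn: "\<And>x. x\<in>B j \<Longrightarrow> norm x = 1"
    and Bind: "independent (B j)" and Bspan: "span (B j) = Vs!j" if "j < t" for j
    using Bp that by blast+
  have Bfin: "finite (B j)" if "j < t" for j using Bind[OF that] independent_imp_finite by blast
  have Bne: "B j \<noteq> {}" if "j < t" for j
  proof
    assume "B j = {}"
    then have "Vs!j = {0}" using Bspan[OF that] by simp
    then show False using nz[OF that] by simp
  qed
  have "\<forall>j. \<exists>L. j < t \<longrightarrow> set L = B j \<and> distinct L"
    using Bfin finite_distinct_list by blast
  from choice[OF this] obtain L where Lp: "\<forall>j. j < t \<longrightarrow> set (L j) = B j \<and> distinct (L j)" by blast
  have Lset: "set (L j) = B j" and Ldist: "distinct (L j)" if "j < t" for j using Lp that by blast+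
  have lenL: "length (L j) = card (B j)" if "j < t" for j
    using distinct_card[OF Ldist[OF that]] Lset[OF that] by simp
  define ns where "ns = map (\<lambda>j. length (L j)) [0..<t]"
  have lenns: "length ns = t" by (simp add: ns_def)
  have nsj: "ns!j = card (B j)" if "j < t" for j
    using that distinct_card[OF Ldist[OF that]] Lset[OF that] by (simp add: ns_def)
  have pos: "\<forall>j<t. ns!j > 0"
    using nsj Bfin Bne by (simp add: card_gt_0_iff)
  define BB where "BB = (\<Union>j\<in>{..<t}. B j)"
  have disj: "B i \<inter> B j = {}" if "i < t" "j < t" "i \<noteq> j" for i j
  proof (rule ccontr)
    assume "B i \<inter> B j \<noteq> {}"
    then obtain x where x: "x \<in> B i" "x \<in> B j" by blast
    then have "x \<bullet> x = 0" using orth[OF that] BV that by blast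
    then have "x = 0" by simp
    then show False using Bn[OF that(1) x(1)] by simp
  qed
  have finBB: "finite BB" unfolding BB_def using Bfin by blast
  have cardBB: "card BB = (\<Sum>j<t. card (B j))"
    unfolding BB_def by (rule card_UN_disjoint) (use Bfin disj in auto)
  have sumns: "sum_list ns = (\<Sum>j<t. card (B j))"
  proof -
    have "sum_list ns = (\<Sum>j\<in>set [0..<t]. length (L j))"
      unfolding ns_def by (rule sum_set_upt_conv_sum_list_nat[symmetric])
    also have "\<dots> = (\<Sum>j<t. card (B j))"
      by (rule sum.cong) (auto simp: atLeast0LessThan lenL)
    finally show ?thesis .
  qed
  have pwBB: "pairwise orthogonal BB"
    unfolding pairwise_def
  proof (intro ballI impI)
    fix x y assume x0: "x \<in> BB" and y0: "y \<in> BB" and xy: "x \<noteq> y"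
    obtain i where i: "i \<in> {..<t}" and x: "x \<in> B i" using x0 unfolding BB_def by blast
    obtain j where j: "j \<in> {..<t}" and y: "y \<in> B j" using y0 unfolding BB_def by blast
    show "orthogonal x y"
    proof (cases "i = j")
      case True then show ?thesis using Bpw[of i] i x y xy by (auto simp: pairwise_def)
    next
      case False then show ?thesis using orth[of i j x y] BV i j x y by (auto simp: orthogonal_def)
    qed
  qed
  have z: "0 \<notin> BB" unfolding BB_def using Bn by fastforce
  have indBB: "independent BB" by (rule pairwise_orthogonal_independent[OF pwBB z])
  have le1: "card BB \<le> CARD('n)" using independent_bound[OF indBB] by simp
  have spanBB: "UNIV \<subseteq> span BB"
  proof
    fix v
    have "v = (\<Sum>j<t. es!j *v v)" using mv_sum_left[of "{..<t}" "\<lambda>j. es!j" v] tot by simp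
    moreover have "(\<Sum>j<t. es!j *v v) \<in> span BB"
    proof (rule span_sum)
      fix j assume j: "j \<in> {..<t}"
      then have "es!j *v v \<in> span (B j)" using Bspan Vsj by simp
      moreover have "span (B j) \<subseteq> span BB" using j unfolding BB_def by (intro span_mono) blast
      ultimately show "es!j *v v \<in> span BB" by blast
    qed
    ultimately show "v \<in> span BB" by simp
  qed
  have le2: "CARD('n) \<le> card BB" using span_card_ge_dim[OF _ spanBB finBB] by simp
  have sn: "sum_list ns = CARD('n)" using le1 le2 cardBB sumns by simp

  let ?bl = "block_of ns :: 'n \<Rightarrow> nat"
  let ?S = "\<lambda>j. sum_list (take j ns)"
  define ap where "ap k = idx_pos k - ?S (?bl k)" for k :: 'n
  define col where "col k = L (?bl k) ! ap k" for k :: 'n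
  have blt: "?bl k < t" for k using block_of_lt[OF lenns sn] by blast
  have kinfo: "?S (?bl k) \<le> idx_pos k \<and> idx_pos k < ?S (?bl k) + ns ! (?bl k)" for k :: 'n
  proof -
    have p: "idx_pos k < sum_list ns" using idx_pos_lt[of k] sn by simp
    have "?S (?bl k) \<le> idx_pos k" using block_ex(2)[OF p] unfolding block_of_def .
    moreover have "idx_pos k < ?S (Suc (?bl k))" using block_ex(3)[OF p] unfolding block_of_def .
    ultimately show ?thesis using take_Suc_sum[of "?bl k" ns] blt[of k] lenns by simp
  qed
  have aplt: "ap k < length (L (?bl k))" for k
  proof -
    have "ns ! ?bl k = length (L (?bl k))" using nsj[OF blt[of k]] lenL[OF blt[of k]] by simp
    then show ?thesis using kinfo[of k] unfolding ap_def by linarith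
  qed
  have colB: "col k \<in> B (?bl k)" for k
    using nth_mem[OF aplt[of k]] Lset[OF blt[of k]] unfolding col_def by simp
  have colV: "col k \<in> Vs ! (?bl k)" for k using colB BV blt by blast
  define Q where "Q = (\<chi> i k. col k $ i)"
  have colQ: "column k Q = col k" for k by (simp add: column_def Q_def vec_eq_iff)
  have Qorth: "orthogonal_matrix Q"
    unfolding orthogonal_matrix_orthonormal_columns colQ
  proof (intro conjI allI impI)
    fix k show "norm (col k) = 1" using Bn[OF blt colB] .
  next
    fix k l :: 'n assume kl: "k \<noteq> l"
    show "orthogonal (col k) (col l)"
    proof (cases "?bl k = ?bl l")
      case False
      then show ?thesis using orth[OF blt blt False colV colV] by (simp add: orthogonal_def)
    next
      case True
      have "idx_pos k \<noteq> idx_pos l" using kl idx_pos_inj by (auto dest: injD)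
      then have "ap k \<noteq> ap l" using kinfo[of k] kinfo[of l] True unfolding ap_def by auto
      then have "col k \<noteq> col l" unfolding col_def True
      proof -
        have ak: "ap k < length (L (?bl l))" using aplt[of k] True by simp
        show "L (?bl l) ! ap k \<noteq> L (?bl l) ! ap l"
          using nth_eq_iff_index_eq[OF Ldist[OF blt[of l]] ak aplt[of l]] \<open>ap k \<noteq> ap l\<close> by simp
      qed
      moreover have "col k \<in> B (?bl l)" "col l \<in> B (?bl l)" using colB True by metis+
      ultimately show ?thesis using Bpw[OF blt[of l]] unfolding pairwise_def by blast
    qed
  qed
  have bd: "\<forall>i<m. block_diagonal ns (transpose Q ** A i ** Q)"
    unfolding block_diagonal_def
  proof (intro allI impI)
    fix i k l assume i: "i < m" and kl: "?bl k \<noteq> ?bl l"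
    show "(transpose Q ** A i ** Q) $ k $ l = 0"
      unfolding entry_formula colQ using blk[OF i blt blt kl colV colV] .
  qed
  show ?thesis using Qorth lenns pos sn bd by blast
qed


theorem mainTheorem5:
  fixes A :: "nat \<Rightarrow> ((real, 'n::{finite,linorder}) vec, 'n::{finite,linorder}) vec" and m t :: nat
  assumes symA: "\<forall>i<m. transpose (A i) = A i"
    and t1: "t \<ge> 1"
  shows "bij_betw (map orth_proj) {Vs. is_oosbd A m t Vs}
           {es. is_complete_orth_idems A m t es \<and> (\<forall>j<t. transpose (es!j) = es!j)}
       \<and> ((\<exists>Q ns. orthogonal_matrix Q \<and> length ns = t \<and> (\<forall>j<t. ns!j > 0) \<and>
              sum_list ns = CARD('n) \<and>
              (\<forall>i<m. block_diagonal ns (transpose Q ** A i ** Q)))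
          \<longleftrightarrow> (\<exists>es. is_complete_orth_idems A m t es \<and> (\<forall>j<t. transpose (es!j) = es!j)))"
proof -
  have 1: "bij_betw (map orth_proj) {Vs. is_oosbd A m t Vs}
           {es. is_complete_orth_idems A m t es \<and> (\<forall>j<t. transpose (es!j) = es!j)}"
    using part1[OF symA, of t] unfolding good_def .
  have 2: "(\<exists>Q ns. orthogonal_matrix Q \<and> length ns = t \<and> (\<forall>j<t. ns!j > 0) \<and>
              sum_list ns = CARD('n) \<and>
              (\<forall>i<m. block_diagonal ns (transpose Q ** A i ** Q)))
          \<longleftrightarrow> (\<exists>es. is_complete_orth_idems A m t es \<and> (\<forall>j<t. transpose (es!j) = es!j))"
  proof
    assume "\<exists>Q ns. orthogonal_matrix Q \<and> length ns = t \<and> (\<forall>j<t. ns!j > 0) \<and>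
              sum_list ns = CARD('n) \<and>
              (\<forall>i<m. block_diagonal ns (transpose Q ** A i ** Q))"
    then obtain Q ns where "orthogonal_matrix Q" "length ns = t" "\<forall>j<t. ns!j > 0"
      "sum_list ns = CARD('n)" "\<forall>i<m. block_diagonal ns (transpose Q ** A i ** Q)" by blast
    from part2_fwd[OF symA this] show "\<exists>es. is_complete_orth_idems A m t es \<and> (\<forall>j<t. transpose (es!j) = es!j)"
      unfolding good_def .
  next
    assume "\<exists>es. is_complete_orth_idems A m t es \<and> (\<forall>j<t. transpose (es!j) = es!j)"
    then obtain es where "good A m t es" unfolding good_def by blast
    from part2_bwd[OF symA this] show "\<exists>Q ns. orthogonal_matrix Q \<and> length ns = t \<and> (\<forall>j<t. ns!j > 0) \<and>
              sum_list ns = CARD('n) \<and>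
              (\<forall>i<m. block_diagonal ns (transpose Q ** A i ** Q))" .
  qed
  show ?thesis using 1 2 by blast
qed

end
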